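(* Let $\delta>0$. Define \[ I^0_\varphi=\inf\Bigl\{\tfrac12\int_0^\varphi\frac{(r'(u)-\lambda_+T_+r(u))^2}{D(u)}du:\ r\in H^1([0,\varphi]),\ r(0)=\delta,\ r(\varphi)=0\Bigr\}, \] \[ I^0_\infty=\inf\Bigl\{\tfrac12\int_0^\infty\frac{(r'(u)-\lambda_+T_+r(u))^2}{D(u)}du:\ r\in H^1_{\rm loc}([0,\infty)),\ r(0)=\delta,\ r(u)\to0\ (u\to\infty)\Bigr\}. \] Then, as $\varphi\to\infty$, \[ I^0_\varphi-I^0_\infty=\frac12\delta^2e^{-2\lambda_+T_+\varphi}\frac{h^{\rm per}(\varphi)}{h^{\rm per}(0)^2}\Bigl[1+\mathcal O\bigl(e^{-2\lambda_+T_+\varphi}\bigr)\Bigr]. \]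
   Context: $\lambda_+,T_+>0$ and $D:\mathbb R\to(0,\infty)$ is continuous, $1$-periodic and bounded away from $0$ (the transversal diffusion coefficient $D_{rr}$ on the unstable orbit). This is the linearisation near the unstable periodic orbit (placed at $r=0$) of the large-deviation problem, where the rate function is approximated by $\frac12\int D\,p_r^2\,d\varphi$ with $p_r=(r'-\lambda_+T_+r)/D$; its minimisers solve $r'=\lambda_+T_+r+D(\varphi)p_r$, $p_r'=-\lambda_+T_+p_r$. Further $h^{\rm per}(\varphi)=\frac{e^{2\lambda_+T_+\varphi}}{1-e^{-2\lambda_+T_+}}\int_\varphi^{\varphi+1}e^{-2\lambda_+T_+u}D(u)\,du$, the periodic solution of $h'=2\lambda_+T_+h-D(\varphi)$. *)

theory Defs
  imports "HOL-Analysis.Analysis" "HOL-Library.Landau_Symbols"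
begin

text \<open>r belongs to H^1([0,a]) with weak derivative g: g is measurable and square
integrable on [0,a], and r is the indefinite integral of g on [0,a].\<close>
definition H1_on :: "real \<Rightarrow> (real \<Rightarrow> real) \<Rightarrow> (real \<Rightarrow> real) \<Rightarrow> bool" where
  "H1_on a r g \<longleftrightarrow> g \<in> borel_measurable lborel
     \<and> set_integrable lborel {0..a} (\<lambda>u. (g u)^2)
     \<and> (\<forall>x\<in>{0..a}. r x = r 0 + (LINT u:{0..x}|lborel. g u))"

definition H1_loc :: "(real \<Rightarrow> real) \<Rightarrow> (real \<Rightarrow> real) \<Rightarrow> bool" where
  "H1_loc r g \<longleftrightarrow> g \<in> borel_measurable lborel
     \<and> (\<forall>a\<ge>0. set_integrable lborel {0..a} (\<lambda>u. (g u)^2))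
     \<and> (\<forall>x\<ge>0. r x = r 0 + (LINT u:{0..x}|lborel. g u))"

definition action :: "real \<Rightarrow> real \<Rightarrow> (real \<Rightarrow> real) \<Rightarrow> real set
     \<Rightarrow> (real \<Rightarrow> real) \<Rightarrow> (real \<Rightarrow> real) \<Rightarrow> ennreal" where
  "action lam T D A r g =
     (\<integral>\<^sup>+ u. ennreal ((g u - lam * T * r u)^2 / D u / 2) * indicator A u \<partial>lborel)"

definition I0_fin :: "real \<Rightarrow> real \<Rightarrow> (real \<Rightarrow> real) \<Rightarrow> real \<Rightarrow> real \<Rightarrow> ennreal" where
  "I0_fin lam T D \<delta> \<phi> =
     (INF rg \<in> {(r, g). H1_on \<phi> r g \<and> r 0 = \<delta> \<and> r \<phi> = 0}.
        action lam T D {0..\<phi>} (fst rg) (snd rg))"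

definition I0_inf :: "real \<Rightarrow> real \<Rightarrow> (real \<Rightarrow> real) \<Rightarrow> real \<Rightarrow> ennreal" where
  "I0_inf lam T D \<delta> =
     (INF rg \<in> {(r, g). H1_loc r g \<and> r 0 = \<delta> \<and> (r \<longlongrightarrow> 0) at_top}.
        action lam T D {0..} (fst rg) (snd rg))"

text \<open>Periodic solution of h' = 2 lam T h - D.\<close>
definition hper :: "real \<Rightarrow> real \<Rightarrow> (real \<Rightarrow> real) \<Rightarrow> real \<Rightarrow> real" where
  "hper lam T D \<phi> = exp (2 * lam * T * \<phi>) / (1 - exp (- 2 * lam * T))
     * integral {\<phi>..\<phi>+1} (\<lambda>u. exp (- 2 * lam * T * u) * D u)"

end

theory Submission
  imports Defs
begin

lemma dv: "DERIV F u :> f \<Longrightarrow> (F has_vector_derivative f) (at u within S)"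
  using has_field_derivative_at_within has_real_derivative_iff_has_vector_derivative by blast

lemma int_cexp:
  fixes a b c :: real
  assumes "a \<le> b"
  shows "set_integrable lborel {a..b} (\<lambda>u. c * exp (-c * u))"
    and "(LINT u:{a..b}|lborel. c * exp (-c * u)) = exp (-c * a) - exp (-c * b)"
proof -
  show "set_integrable lborel {a..b} (\<lambda>u. c * exp (-c * u))"
    by (intro borel_integrable_atLeastAtMost' continuous_intros)
  have "integral\<^sup>L lborel (\<lambda>u. indicator {a .. b} u *\<^sub>R (c * exp (-c * u))) = (- exp (-c * b)) - (- exp (-c * a))"
  proof (rule integral_FTC_atLeastAtMost[OF assms])
    fix u show "((\<lambda>u. - exp (-c * u)) has_vector_derivative (c * exp (-c * u))) (at u within {a..b})"
      by (rule dv) (auto intro!: derivative_eq_intros)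
  qed (intro continuous_intros)
  then show "(LINT u:{a..b}|lborel. c * exp (-c * u)) = exp (-c * a) - exp (-c * b)"
    unfolding set_lebesgue_integral_def by simp
qed

lemma fubini_part:
  fixes g :: "real \<Rightarrow> real" and c x :: real
  assumes c: "c > 0" and x: "0 \<le> x"
    and gm[measurable]: "g \<in> borel_measurable lborel"
    and gi: "set_integrable lborel {0..x} g"
  shows "(LINT u:{0..x}|lborel. c * exp (-c * u) * (LINT v:{0..u}|lborel. g v))
        = (LINT v:{0..x}|lborel. g v * (exp (-c * v) - exp (-c * x)))"
proof -
  define ff where "ff h v u = indicator {0..x} v * h v * (indicator {v..x} u * (c * exp (-c * u)))"
    for h :: "real \<Rightarrow> real" and v u :: real
  have f_alt: "ff g v u = indicator {0..x} u * (c * exp (-c * u)) * (indicator {0..u} v * g v)" for v u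
    unfolding ff_def by (auto split: split_indicator)
  have inner_u: "(\<integral>u. ff h v u \<partial>lborel) = indicator {0..x} v * h v * (exp (-c * v) - exp (-c * x))"
     and inner_int: "integrable lborel (\<lambda>u. ff h v u)" for h v
  proof -
    have ii: "integrable lborel (\<lambda>u. indicator {v..x} u * (c * exp (-c * u)))"
    proof -
      have cc: "continuous_on {v..x} (\<lambda>u. c * exp (-c * u))" by (intro continuous_intros)
      show ?thesis using borel_integrable_compact[OF compact_Icc cc] by simp
    qed
    then show "integrable lborel (\<lambda>u. ff h v u)" unfolding ff_def by simp
    show "(\<integral>u. ff h v u \<partial>lborel) = indicator {0..x} v * h v * (exp (-c * v) - exp (-c * x))"
    proof (cases "v \<in> {0..x}")
      case True
      then have "(\<integral>u. indicator {v..x} u * (c * exp (-c * u)) \<partial>lborel) = exp (-c * v) - exp (-c * x)"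
        using int_cexp(2)[of v x c] unfolding set_lebesgue_integral_def by simp
      then show ?thesis unfolding ff_def by simp
    next
      case False
      then show ?thesis unfolding ff_def by simp
    qed
  qed
  have inner_v: "(\<integral>v. ff g v u \<partial>lborel) = indicator {0..x} u * (c * exp (-c * u)) * (LINT v:{0..u}|lborel. g v)" for u
    unfolding f_alt set_lebesgue_integral_def by simp
  have meas: "(\<lambda>(v, u). ff g v u) \<in> borel_measurable (lborel \<Otimes>\<^sub>M lborel)"
  proof -
    have gb[measurable]: "g \<in> borel_measurable borel" using gm by simp
    have e: "ff g v u = (if 0 \<le> v \<and> v \<le> x \<and> v \<le> u \<and> u \<le> x then g v * (c * exp (-c * u)) else 0)" for v u
      unfolding ff_def by (simp split: split_indicator)
    have "(\<lambda>p::real\<times>real. (if 0 \<le> fst p \<and> fst p \<le> x \<and> fst p \<le> snd p \<and> snd p \<le> x then g (fst p) * (c * exp (-c * snd p)) else 0)) \<in> borel_measurable (borel \<Otimes>\<^sub>M borel)"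
      by measurable
    then show ?thesis unfolding e by (simp add: lborel_prod borel_prod case_prod_beta')
  qed
  have gabs: "set_integrable lborel {0..x} (\<lambda>v. \<bar>g v\<bar>)"
  proof -
    have "(\<lambda>v. \<bar>indicator {0..x} v *\<^sub>R g v\<bar>) = (\<lambda>v. indicator {0..x} v *\<^sub>R \<bar>g v\<bar>)"
      by (rule ext) (simp split: split_indicator)
    then show ?thesis using integrable_abs[OF gi[unfolded set_integrable_def]] unfolding set_integrable_def by simp
  qed
  have prodint: "integrable (lborel \<Otimes>\<^sub>M lborel) (\<lambda>(v, u). ff g v u)"
  proof (rule lborel_pair.Fubini_integrable)
    show "(\<lambda>(v, u). ff g v u) \<in> borel_measurable (lborel \<Otimes>\<^sub>M lborel)" by (rule meas)
    have nrm: "(\<integral>u. norm (case (v, u) of (v, u) \<Rightarrow> ff g v u) \<partial>lborel) = indicator {0..x} v * \<bar>g v\<bar> * (exp (-c * v) - exp (-c * x))" for v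
    proof -
      have "(\<lambda>u. norm (case (v, u) of (v, u) \<Rightarrow> ff g v u)) = (\<lambda>u. ff (\<lambda>v. \<bar>g v\<bar>) v u)"
        unfolding ff_def using c by (auto simp: abs_mult split: split_indicator)
      then show ?thesis using inner_u by simp
    qed
    show "integrable lborel (\<lambda>v. \<integral>u. norm (case (v, u) of (v, u) \<Rightarrow> ff g v u) \<partial>lborel)"
      unfolding nrm
    proof (rule Bochner_Integration.integrable_bound)
      show "integrable lborel (\<lambda>v. indicator {0..x} v *\<^sub>R \<bar>g v\<bar>)" using gabs unfolding set_integrable_def .
      show "(\<lambda>v. indicat_real {0..x} v * \<bar>g v\<bar> * (exp (- c * v) - exp (- c * x))) \<in> borel_measurable lborel"
        by measurable
      show "AE v in lborel. norm (indicat_real {0..x} v * \<bar>g v\<bar> * (exp (- c * v) - exp (- c * x))) \<le> norm (indicat_real {0..x} v *\<^sub>R \<bar>g v\<bar>)"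
      proof (rule AE_I2)
        fix v
        show "norm (indicat_real {0..x} v * \<bar>g v\<bar> * (exp (- c * v) - exp (- c * x))) \<le> norm (indicat_real {0..x} v *\<^sub>R \<bar>g v\<bar>)"
        proof (cases "v \<in> {0..x}")
          case True
          have e1: "exp (- c * v) \<le> 1" using c True by simp
          have e2: "exp (- c * x) \<le> exp (- c * v)" using c True by (simp add: mult_left_mono)
          have e3: "0 < exp (- c * x)" by simp
          have "0 \<le> exp (- c * v) - exp (- c * x)" "exp (- c * v) - exp (- c * x) \<le> 1"
            using e1 e2 e3 by linarith+
          then show ?thesis using True by (auto simp: abs_mult mult_left_le)
        qed simp
      qed
    qed
    show "AE v in lborel. integrable lborel (\<lambda>u. case (v, u) of (v, u) \<Rightarrow> ff g v u)"
      using inner_int by simp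
  qed
  have "(\<integral>u. (\<integral>v. ff g v u \<partial>lborel) \<partial>lborel) = (\<integral>v. (\<integral>u. ff g v u \<partial>lborel) \<partial>lborel)"
    using lborel_pair.Fubini_integral[OF prodint] by simp
  then show ?thesis
    unfolding inner_u inner_v set_lebesgue_integral_def by (simp add: mult_ac)
qed

lemma sq_int_imp_int:
  fixes g :: "real \<Rightarrow> real"
  assumes [measurable]: "g \<in> borel_measurable lborel"
    and sq: "set_integrable lborel {0..x} (\<lambda>u. (g u)^2)"
  shows "set_integrable lborel {0..x} g"
  unfolding set_integrable_def
proof (rule Bochner_Integration.integrable_bound)
  have i1: "integrable lborel (\<lambda>u. indicator {0..x} u *\<^sub>R (1::real))"
    by (rule borel_integrable_compact) auto
  show "integrable lborel (\<lambda>u. indicator {0..x} u *\<^sub>R (1::real) + indicator {0..x} u *\<^sub>R (g u)^2)"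
    by (rule Bochner_Integration.integrable_add[OF i1 sq[unfolded set_integrable_def]])
  show "(\<lambda>u. indicat_real {0..x} u *\<^sub>R g u) \<in> borel_measurable lborel" by measurable
  show "AE u in lborel. norm (indicat_real {0..x} u *\<^sub>R g u) \<le> norm (indicator {0..x} u *\<^sub>R (1::real) + indicator {0..x} u *\<^sub>R (g u)^2)"
  proof (rule AE_I2)
    fix u
    have "\<bar>g u\<bar> \<le> 1 + (g u)^2"
    proof (cases "\<bar>g u\<bar> \<le> 1")
      case True
      moreover have "0 \<le> (g u)^2" by simp
      ultimately show ?thesis by linarith
    next
      case False
      then have "\<bar>g u\<bar> * 1 \<le> \<bar>g u\<bar> * \<bar>g u\<bar>" by (intro mult_left_mono) auto
      then show ?thesis by (simp add: power2_eq_square)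
    qed
    then show "norm (indicat_real {0..x} u *\<^sub>R g u) \<le> norm (indicator {0..x} u *\<^sub>R (1::real) + indicator {0..x} u *\<^sub>R (g u)^2)"
      by (auto split: split_indicator)
  qed
qed

lemma enn_int_le:
  fixes h :: "'a \<Rightarrow> real"
  assumes hi: "integrable M h"
  shows "ennreal (\<integral>x. h x \<partial>M) \<le> (\<integral>\<^sup>+x. ennreal (h x) \<partial>M)"
proof -
  have im: "integrable M (\<lambda>x. max 0 (h x))" using hi by (intro integrable_max) auto
  have "(\<integral>x. h x \<partial>M) \<le> (\<integral>x. max 0 (h x) \<partial>M)" by (intro integral_mono hi im) auto
  then have "ennreal (\<integral>x. h x \<partial>M) \<le> ennreal (\<integral>x. max 0 (h x) \<partial>M)" by (rule ennreal_leI)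
  also have "\<dots> = (\<integral>\<^sup>+x. ennreal (max 0 (h x)) \<partial>M)" by (rule nn_integral_eq_integral[symmetric]) (use im in auto)
  also have "\<dots> = (\<integral>\<^sup>+x. ennreal (h x) \<partial>M)" by (intro nn_integral_cong) (auto simp: max_def ennreal_neg)
  finally show ?thesis .
qed

lemma ident:
  fixes g r :: "real \<Rightarrow> real" and c x :: real
  assumes c: "c > 0" and x: "0 \<le> x"
    and gm[measurable]: "g \<in> borel_measurable lborel"
    and gi: "set_integrable lborel {0..x} g"
    and rr: "\<forall>u\<in>{0..x}. r u = r 0 + (LINT v:{0..u}|lborel. g v)"
  shows "continuous_on {0..x} r"
    and "set_integrable lborel {0..x} (\<lambda>u. exp (-c * u) * (g u - c * r u))"
    and "(LINT u:{0..x}|lborel. exp (-c * u) * (g u - c * r u)) = exp (-c * x) * r x - r 0"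
proof -
  have gI: "g integrable_on {0..x}" by (rule set_borel_integral_eq_integral(1)[OF gi])
  have rr': "r u = r 0 + integral {0..u} g" if u: "u \<in> {0..x}" for u
  proof -
    have si: "set_integrable lborel {0..u} g" by (rule set_integrable_subset[OF gi]) (use u in auto)
    have "(LINT v:{0..u}|lborel. g v) = integral {0..u} g" by (rule set_borel_integral_eq_integral(2)[OF si])
    moreover have "r u = r 0 + (LINT v:{0..u}|lborel. g v)" using rr u by blast
    ultimately show ?thesis by simp
  qed
  have "continuous_on {0..x} (\<lambda>u. r 0 + integral {0..u} g)"
    by (intro continuous_intros indefinite_integral_continuous_1 gI)
  then show rc: "continuous_on {0..x} r"
    by (rule continuous_on_eq) (rule rr'[symmetric])
  have i1: "set_integrable lborel {0..x} (\<lambda>u. exp (-c * u) * g u)"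
    unfolding set_integrable_def
  proof (rule Bochner_Integration.integrable_bound)
    show "integrable lborel (\<lambda>u. indicator {0..x} u *\<^sub>R g u)" using gi unfolding set_integrable_def .
    show "(\<lambda>u. indicat_real {0..x} u *\<^sub>R (exp (-c * u) * g u)) \<in> borel_measurable lborel" by measurable
    show "AE u in lborel. norm (indicat_real {0..x} u *\<^sub>R (exp (-c * u) * g u)) \<le> norm (indicat_real {0..x} u *\<^sub>R g u)"
    proof (rule AE_I2)
      fix u show "norm (indicat_real {0..x} u *\<^sub>R (exp (-c * u) * g u)) \<le> norm (indicat_real {0..x} u *\<^sub>R g u)"
      proof (cases "u \<in> {0..x}")
        case True
        then have "exp (-c * u) \<le> 1" using c by simp
        then show ?thesis using True by (simp add: abs_mult mult_left_le_one_le)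
      qed simp
    qed
  qed
  have i2: "set_integrable lborel {0..x} (\<lambda>u. exp (-c * u) * r u)"
    unfolding set_integrable_def by (rule borel_integrable_compact) (auto intro!: continuous_intros rc)
  have i3: "set_integrable lborel {0..x} (\<lambda>u. c * exp (-c * u))" by (rule int_cexp(1)) (use x in simp)
  have e1: "(\<lambda>u. exp (-c * u) * (g u - c * r u)) = (\<lambda>u. exp (-c * u) * g u - c * (exp (-c * u) * r u))"
    by (rule ext) (simp add: algebra_simps)
  have i2c: "set_integrable lborel {0..x} (\<lambda>u. c * (exp (-c * u) * r u))" using i2 by simp
  show "set_integrable lborel {0..x} (\<lambda>u. exp (-c * u) * (g u - c * r u))"
    unfolding e1 using i1 i2c by (rule set_integral_diff(1))
  have L1: "(LINT u:{0..x}|lborel. exp (-c * u) * (g u - c * r u))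
       = (LINT u:{0..x}|lborel. exp (-c * u) * g u) - c * (LINT u:{0..x}|lborel. exp (-c * u) * r u)"
    unfolding e1 using set_integral_diff(2)[OF i1 i2c] by simp
  have L2: "(LINT u:{0..x}|lborel. c * exp (-c * u) * (r u - r 0))
       = (LINT u:{0..x}|lborel. c * exp (-c * u) * (LINT v:{0..u}|lborel. g v))"
  proof (rule set_lebesgue_integral_cong)
    show "\<forall>u. u \<in> {0..x} \<longrightarrow> c * exp (-c * u) * (r u - r 0) = c * exp (-c * u) * (LINT v:{0..u}|lborel. g v)"
    proof (intro allI impI)
      fix u assume "u \<in> {0..x}"
      then have "r u = r 0 + (LINT v:{0..u}|lborel. g v)" using rr by blast
      then show "c * exp (-c * u) * (r u - r 0) = c * exp (-c * u) * (LINT v:{0..u}|lborel. g v)" by simp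
    qed
  qed simp
  have L3: "(LINT u:{0..x}|lborel. c * exp (-c * u) * (r u - r 0))
       = c * (LINT u:{0..x}|lborel. exp (-c * u) * r u) - r 0 * (1 - exp (-c * x))"
  proof -
    have e: "(\<lambda>u. c * exp (-c * u) * (r u - r 0)) = (\<lambda>u. c * (exp (-c * u) * r u) - r 0 * (c * exp (-c * u)))"
      by (rule ext) (simp add: algebra_simps)
    have i3c: "set_integrable lborel {0..x} (\<lambda>u. r 0 * (c * exp (-c * u)))" using i3 by simp
    show ?thesis unfolding e set_integral_diff(2)[OF i2c i3c] using int_cexp(2)[of 0 x c] x by simp
  qed
  have gE: "set_integrable lborel {0..x} (\<lambda>u. exp (-c * x) * g u)" using gi by simp
  have L4: "(LINT v:{0..x}|lborel. g v * (exp (-c * v) - exp (-c * x)))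
       = (LINT u:{0..x}|lborel. exp (-c * u) * g u) - exp (-c * x) * (LINT u:{0..x}|lborel. g u)"
  proof -
    have e: "(\<lambda>v. g v * (exp (-c * v) - exp (-c * x))) = (\<lambda>u. exp (-c * u) * g u - exp (-c * x) * g u)"
      by (rule ext) (simp add: algebra_simps)
    show ?thesis unfolding e set_integral_diff(2)[OF i1 gE] by simp
  qed
  have F: "(LINT u:{0..x}|lborel. c * exp (-c * u) * (LINT v:{0..u}|lborel. g v))
        = (LINT v:{0..x}|lborel. g v * (exp (-c * v) - exp (-c * x)))"
    by (rule fubini_part[OF c x gm gi])
  have xin: "x \<in> {0..x}" using x by simp
  have rx: "r x = r 0 + (LINT u:{0..x}|lborel. g u)" using rr xin by blast
  define A where "A = (LINT u:{0..x}|lborel. exp (-c * u) * g u)"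
  define B where "B = (LINT u:{0..x}|lborel. exp (-c * u) * r u)"
  define Gx where "Gx = (LINT u:{0..x}|lborel. g u)"
  define Ex where "Ex = exp (-c * x)"
  define X where "X = (LINT u:{0..x}|lborel. c * exp (-c * u) * (r u - r 0))"
  define Y where "Y = (LINT u:{0..x}|lborel. c * exp (-c * u) * (LINT v:{0..u}|lborel. g v))"
  define Z where "Z = (LINT v:{0..x}|lborel. g v * (exp (-c * v) - exp (-c * x)))"
  have l2: "X = Y" using L2 unfolding X_def Y_def .
  have l3: "X = c * B - r 0 * (1 - Ex)" using L3 unfolding X_def B_def Ex_def .
  have l4: "Z = A - Ex * Gx" using L4 unfolding Z_def A_def Ex_def Gx_def .
  have f: "Y = Z" using F unfolding Y_def Z_def .
  have chain: "c * B - r 0 * (1 - Ex) = A - Ex * Gx" using l2 l3 l4 f by simp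
  have a1: "r 0 * (1 - Ex) = r 0 - Ex * r 0" by (simp add: algebra_simps)
  have a2: "Ex * (r 0 + Gx) - r 0 = Ex * r 0 + Ex * Gx - r 0" by (simp add: algebra_simps)
  have "A - c * B = Ex * (r 0 + Gx) - r 0" using chain a1 a2 by linarith
  then show "(LINT u:{0..x}|lborel. exp (-c * u) * (g u - c * r u)) = exp (-c * x) * r x - r 0"
    unfolding L1 rx A_def B_def Gx_def Ex_def .
qed

lemma LB:
  fixes lam T c x :: real and D g r :: "real \<Rightarrow> real"
  assumes ceq: "c = lam * T" and cpos: "c > 0" and x: "0 \<le> x"
    and Dc: "continuous_on UNIV D" and Dpos: "\<And>u. D u > 0"
    and H: "H1_on x r g"
  shows "ennreal ((r 0 - exp (-c * x) * r x)^2 / (2 * (LINT u:{0..x}|lborel. exp (-2*c*u) * D u)))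
          \<le> action lam T D {0..x} r g"
proof -
  from H have gm[measurable]: "g \<in> borel_measurable lborel" and g2: "set_integrable lborel {0..x} (\<lambda>u. (g u)^2)"
    and rr: "\<forall>u\<in>{0..x}. r u = r 0 + (LINT u:{0..u}|lborel. g u)"
    unfolding H1_on_def by blast+
  have gi: "set_integrable lborel {0..x} g" by (rule sq_int_imp_int[OF gm g2])
  note id = ident[OF cpos x gm gi rr]
  define S where "S = r 0 - exp (-c * x) * r x"
  define K where "K = (LINT u:{0..x}|lborel. exp (-2*c*u) * D u)"
  define q where "q u = g u - c * r u" for u
  have Eq: "(LINT u:{0..x}|lborel. exp (-c * u) * q u) = - S" using id(3) unfolding q_def S_def by simp
  have Eqi: "set_integrable lborel {0..x} (\<lambda>u. exp (-c * u) * q u)" using id(2) unfolding q_def .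
  have Wi: "set_integrable lborel {0..x} (\<lambda>u. exp (-2*c*u) * D u)"
    by (intro borel_integrable_atLeastAtMost' continuous_intros continuous_on_subset[OF Dc]) auto
  have act: "action lam T D {0..x} r g = (\<integral>\<^sup>+u. ennreal ((q u)^2 / D u / 2) * indicator {0..x} u \<partial>lborel)"
    unfolding action_def q_def ceq by simp
  show ?thesis
  proof (cases "K > 0")
    case False
    then have "S^2/(2*K) \<le> 0" by (intro divide_nonneg_nonpos) auto
    then show ?thesis unfolding S_def[symmetric] K_def[symmetric] by (simp add: ennreal_neg)
  next
    case True
    define l where "l = S / K"
    define h where "h u = (-l) * (exp (-c * u) * q u) - (l^2/2) * (exp (-2*c*u) * D u)" for u
    have hle: "h u \<le> (q u)^2 / D u / 2" for u
    proof -
      define d where "d = D u"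
      define e where "e = exp (-c * u)"
      have d: "d > 0" using Dpos d_def by simp
      have ee: "exp (-2*c*u) = e * e" unfolding e_def by (subst exp_add[symmetric]) (simp add: algebra_simps)
      have sq: "0 \<le> (q u + l*d*e)^2" by simp
      have ex: "(q u + l*d*e)^2 = (q u)^2 + (l*d*e)^2 + 2 * (q u) * (l*d*e)" by (rule power2_sum)
      have t1: "(-l) * (e * q u) * d = - ((q u) * (l*d*e))" by (simp add: algebra_simps)
      have t2: "(l^2/2) * (e * e * d) * d = (l*d*e)^2 / 2" by (simp add: power2_eq_square algebra_simps)
      have key: "(-l) * (e * q u) * d - (l^2/2) * (e * e * d) * d \<le> (q u)^2 / 2"
      proof -
        have ex': "(q u + l*d*e)^2 = (q u)^2 + (l*d*e)^2 + 2 * ((q u) * (l*d*e))" using ex by (simp add: mult.assoc)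
        show ?thesis unfolding t1 t2 using sq ex' by linarith
      qed
      have hd: "h u * d = (-l) * (e * q u) * d - (l^2/2) * (e * e * d) * d"
        unfolding h_def ee e_def[symmetric] d_def[symmetric] by (simp add: left_diff_distrib)
      have "h u \<le> ((q u)^2 / 2) / d"
        using key hd d by (simp add: pos_le_divide_eq)
      then show ?thesis unfolding d_def by simp
    qed
    have hi: "set_integrable lborel {0..x} h"
      unfolding h_def using Eqi Wi by (intro set_integral_diff(1) set_integrable_mult_right) auto
    have hint: "(LINT u:{0..x}|lborel. h u) = S^2 / (2*K)"
    proof -
      have a: "(LINT u:{0..x}|lborel. (-l) * (exp (-c * u) * q u)) = (-l) * (-S)"
        by (simp only: set_integral_mult_right Eq)
      have b: "(LINT u:{0..x}|lborel. (l^2/2) * (exp (-2*c*u) * D u)) = (l^2/2) * K"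
        by (simp only: set_integral_mult_right K_def)
      have "(LINT u:{0..x}|lborel. h u) = (LINT u:{0..x}|lborel. (-l) * (exp (-c * u) * q u)) - (LINT u:{0..x}|lborel. (l^2/2) * (exp (-2*c*u) * D u))"
      proof -
        have i_a: "set_integrable lborel {0..x} (\<lambda>u. (-l) * (exp (-c * u) * q u))"
          by (rule set_integrable_mult_right) (rule Eqi)
        have i_b: "set_integrable lborel {0..x} (\<lambda>u. (l^2/2) * (exp (-2*c*u) * D u))"
          by (rule set_integrable_mult_right) (rule Wi)
        show ?thesis unfolding h_def by (rule set_integral_diff(2)[OF i_a i_b])
      qed
      also have "\<dots> = (-l) * (- S) - (l^2/2) * K" by (simp only: a b)
      also have "\<dots> = S^2 / (2*K)" unfolding l_def using True by (simp add: field_simps power2_eq_square)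
      finally show ?thesis .
    qed
    have "ennreal (S^2 / (2*K)) = ennreal (\<integral>u. indicator {0..x} u *\<^sub>R h u \<partial>lborel)"
      using hint unfolding set_lebesgue_integral_def by simp
    also have "\<dots> \<le> (\<integral>\<^sup>+u. ennreal (indicator {0..x} u *\<^sub>R h u) \<partial>lborel)"
      by (rule enn_int_le) (use hi in \<open>simp add: set_integrable_def\<close>)
    also have "\<dots> \<le> (\<integral>\<^sup>+u. ennreal ((q u)^2 / D u / 2) * indicator {0..x} u \<partial>lborel)"
    proof (rule nn_integral_mono)
      fix u show "ennreal (indicator {0..x} u *\<^sub>R h u) \<le> ennreal ((q u)^2 / D u / 2) * indicator {0..x} u"
        using hle[of u] by (auto split: split_indicator intro: ennreal_leI)
    qed
    finally show ?thesis unfolding act S_def[symmetric] K_def[symmetric] .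
  qed
qed

definition GG :: "real \<Rightarrow> (real \<Rightarrow> real) \<Rightarrow> real \<Rightarrow> real" where
  "GG c D x = (LBINT y=(0::real)..x. exp (-2*c*y) * D y)"
definition KI :: "real \<Rightarrow> (real \<Rightarrow> real) \<Rightarrow> real" where
  "KI c D = GG c D 1 / (1 - exp (-2*c))"
definition TF :: "real \<Rightarrow> (real \<Rightarrow> real) \<Rightarrow> real \<Rightarrow> real" where
  "TF c D x = KI c D - GG c D x"

locale setting =
  fixes c :: real and D :: "real \<Rightarrow> real"
  assumes cpos: "c > 0" and Dc: "continuous_on UNIV D" and Dper: "\<And>x. D (x+1) = D x"
    and Dpos: "\<And>x. D x > 0"

context setting
begin

lemma Wcont: "continuous_on UNIV (\<lambda>u. exp (-2*c*u) * D u)"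
  by (intro continuous_intros Dc)

lemma Wpos: "exp (-2*c*u) * D u > 0"
  using Dpos by simp

lemma Wshift: "exp (-2*c*(u+1)) * D (u+1) = exp (-2*c) * (exp (-2*c*u) * D u)"
proof -
  have "exp (-2*c*(u+1)) = exp (-2*c) * exp (-2*c*u)"
    by (subst exp_add[symmetric]) (simp add: algebra_simps)
  then show ?thesis using Dper by simp
qed

lemma G_deriv: "DERIV (GG c D) x :> exp (-2*c*x) * D x"
proof -
  have "((\<lambda>u. LBINT y=(0::real)..u. exp (-2*c*y) * D y) has_vector_derivative (exp (-2*c*x) * D x)) (at x within {-\<bar>x\<bar>-1..\<bar>x\<bar>+1})"
  proof (rule interval_integral_FTC2)
    show "continuous_on {-\<bar>x\<bar>-1..\<bar>x\<bar>+1} (\<lambda>y. exp (-2*c*y) * D y)"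
      by (rule continuous_on_subset[OF Wcont]) simp
  qed auto
  moreover have "at x within {-\<bar>x\<bar>-1..\<bar>x\<bar>+1} = at x" by (rule at_within_Icc_at) auto
  moreover have "GG c D = (\<lambda>u. LBINT y=(0::real)..u. exp (-2*c*y) * D y)" by (rule ext) (simp add: GG_def)
  ultimately show ?thesis by (simp add: has_real_derivative_iff_has_vector_derivative)
qed

lemma G_cont: "continuous_on UNIV (GG c D)"
  using G_deriv by (intro DERIV_continuous_on) (auto intro: has_field_derivative_at_within)

lemma G0: "GG c D 0 = 0" by (simp add: GG_def)

lemma G_Icc: "0 \<le> x \<Longrightarrow> GG c D x = (LINT u:{0..x}|lborel. exp (-2*c*u) * D u)"
  by (simp add: GG_def interval_integral_Icc)

lemma G_less: "x < y \<Longrightarrow> GG c D x < GG c D y"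
  by (rule DERIV_pos_imp_increasing[of x y "GG c D"]) (use G_deriv Wpos in blast)+

lemma G_le: "x \<le> y \<Longrightarrow> GG c D x \<le> GG c D y"
  using G_less by (cases "x = y") (auto simp: less_imp_le)

lemma eps: "exp (-2*c) < 1" "0 < exp (-2*c)"
  using cpos by auto

lemma G_shift: "GG c D (x+1) - exp (-2*c) * GG c D x = GG c D 1"
proof -
  have "\<forall>x. DERIV (\<lambda>x. GG c D (x+1) - exp (-2*c) * GG c D x) x :> 0"
  proof
    fix x
    have d1: "DERIV (\<lambda>x. GG c D (x+1)) x :> exp (-2*c*(x+1)) * D (x+1) * 1"
      by (rule DERIV_chain2[OF G_deriv]) (auto intro!: derivative_eq_intros)
    have dd: "DERIV (\<lambda>x. GG c D (x+1) - exp (-2*c) * GG c D x) x :> exp (-2*c*(x+1)) * D (x+1) * 1 - exp (-2*c) * (exp (-2*c*x) * D x)"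
      by (intro DERIV_diff d1 DERIV_cmult G_deriv)
    have z: "exp (-2*c*(x+1)) * D (x+1) * 1 - exp (-2*c) * (exp (-2*c*x) * D x) = 0"
      using Wshift[of x] by simp
    show "DERIV (\<lambda>x. GG c D (x+1) - exp (-2*c) * GG c D x) x :> 0"
      by (rule DERIV_cong[OF dd z])
  qed
  then have "GG c D (x+1) - exp (-2*c) * GG c D x = GG c D (0+1) - exp (-2*c) * GG c D 0"
    by (rule DERIV_isconst_all)
  then show ?thesis by (simp add: G0)
qed

lemma G1pos: "GG c D 1 > 0" using G_less[of 0 1] G0 by simp

lemma KIpos: "KI c D > 0" unfolding KI_def using G1pos eps by simp

lemma TF_alt: "TF c D x = (GG c D (x+1) - GG c D x) / (1 - exp (-2*c))"
proof -
  have "GG c D (x+1) = GG c D 1 + exp (-2*c) * GG c D x" using G_shift[of x] by simp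
  then show ?thesis unfolding TF_def KI_def using eps by (simp add: field_simps)
qed

lemma TF_pos: "TF c D x > 0"
  unfolding TF_alt using G_less[of x "x+1"] eps by simp

lemma TF0: "TF c D 0 = KI c D" by (simp add: TF_def G0)

lemma TF_shift: "TF c D (x+1) = exp (-2*c) * TF c D x"
proof -
  have "GG c D (x+1) = GG c D 1 + exp (-2*c) * GG c D x" using G_shift[of x] by simp
  then show ?thesis unfolding TF_def KI_def using eps by (simp add: field_simps)
qed

lemma TF_deriv: "DERIV (TF c D) x :> - (exp (-2*c*x) * D x)"
proof -
  have "TF c D = (\<lambda>x. KI c D - GG c D x)" by (rule ext) (simp add: TF_def)
  then show ?thesis using DERIV_diff[OF DERIV_const G_deriv] by simp
qed

lemma TF_anti: "x \<le> y \<Longrightarrow> TF c D y \<le> TF c D x"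
  unfolding TF_def using G_le by simp

lemma TF_bound: "0 \<le> x \<Longrightarrow> TF c D x \<le> TF c D 0 * exp (2*c) * exp (-2*c*x)"
proof -
  assume x: "0 \<le> x"
  have sh: "TF c D (y + real n) = exp (-2*c) ^ n * TF c D y" for y n
  proof (induction n)
    case (Suc n)
    have "TF c D (y + real (Suc n)) = TF c D ((y + real n) + 1)" by (simp add: algebra_simps)
    also have "\<dots> = exp (-2*c) * TF c D (y + real n)" by (rule TF_shift)
    finally show ?case using Suc by simp
  qed simp
  define n where "n = nat \<lfloor>x\<rfloor>"
  have n1: "real n \<le> x" unfolding n_def using x by linarith
  have n2: "x < real n + 1" unfolding n_def using x by linarith
  have "TF c D x = exp (-2*c) ^ n * TF c D (x - real n)" using sh[of "x - real n" n] by simp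
  also have "\<dots> \<le> exp (-2*c) ^ n * TF c D 0"
    by (intro mult_left_mono TF_anti) (use n1 in auto)
  also have "exp (-2*c) ^ n = exp (real n * (-2*c))" by (rule exp_of_nat_mult[symmetric])
  also have "exp (real n * (-2*c)) \<le> exp (2*c) * exp (-2*c*x)"
  proof -
    have h1: "2*c*(x - 1) \<le> 2*c*real n" using n2 cpos by (intro mult_left_mono) auto
    have e1: "real n * (-2*c) = -(2*c*real n)" by simp
    have e2: "2*c + -2*c*x = -(2*c*(x-1))" by (simp add: algebra_simps)
    have "real n * (-2*c) \<le> 2*c + -2*c*x" unfolding e1 e2 using h1 by linarith
    then have "exp (real n * (-2*c)) \<le> exp (2*c + -2*c*x)" by (simp only: exp_le_cancel_iff)
    then show ?thesis by (simp only: exp_add)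
  qed
  then have "exp (real n * (-2*c)) * TF c D 0 \<le> exp (2*c) * exp (-2*c*x) * TF c D 0"
    using TF_pos[of 0] by (intro mult_right_mono) auto
  finally show ?thesis by (simp add: mult_ac)
qed

lemma exp_neg_lim: "k > 0 \<Longrightarrow> ((\<lambda>x::real. exp (-k*x)) \<longlongrightarrow> 0) at_top"
proof -
  assume k: "k > 0"
  have "filterlim (\<lambda>x::real. (-k) * x) at_bot at_top"
    by (rule filterlim_tendsto_neg_mult_at_bot[OF tendsto_const _ filterlim_ident]) (use k in simp)
  then show ?thesis using filterlim_compose[OF exp_at_bot] by (simp add: o_def)
qed

lemma TF_lim: "(TF c D \<longlongrightarrow> 0) at_top"
proof (rule tendsto_sandwich[of "\<lambda>_. 0" _ _ "\<lambda>x. TF c D 0 * exp (2*c) * exp (-2*c*x)"])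
  show "\<forall>\<^sub>F n in at_top. 0 \<le> TF c D n" using TF_pos by (simp add: less_imp_le)
  show "\<forall>\<^sub>F n in at_top. TF c D n \<le> TF c D 0 * exp (2*c) * exp (-2*c*n)"
    by (rule eventually_mono[OF eventually_ge_at_top[of 0]]) (rule TF_bound)
  have "((\<lambda>x. exp (-2*c*x)) \<longlongrightarrow> 0) at_top" using exp_neg_lim[of "2*c"] cpos by simp
  then show "((\<lambda>x. TF c D 0 * exp (2*c) * exp (-2*c*x)) \<longlongrightarrow> 0) at_top"
    using tendsto_mult_left[of _ 0 at_top "TF c D 0 * exp (2*c)"] by simp
qed simp

lemma TF_lim2: "((\<lambda>x. exp (c*x) * TF c D x) \<longlongrightarrow> 0) at_top"
proof (rule tendsto_sandwich[of "\<lambda>_. 0" _ _ "\<lambda>x. TF c D 0 * exp (2*c) * exp (-c*x)"])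
  show "\<forall>\<^sub>F n in at_top. 0 \<le> exp (c*n) * TF c D n" using TF_pos by (simp add: less_imp_le)
  have bnd: "exp (c*x) * TF c D x \<le> TF c D 0 * exp (2*c) * exp (-c*x)" if x: "0 \<le> x" for x
  proof -
    have "exp (c*x) * TF c D x \<le> exp (c*x) * (TF c D 0 * exp (2*c) * exp (-2*c*x))"
      using TF_bound[OF x] by (intro mult_left_mono) auto
    also have "exp (c*x) * exp (-2*c*x) = exp (-c*x)" by (subst exp_add[symmetric]) (simp add: algebra_simps)
    then have "exp (c*x) * (TF c D 0 * exp (2*c) * exp (-2*c*x)) = TF c D 0 * exp (2*c) * exp (-c*x)"
      by (simp add: mult_ac)
    finally show ?thesis .
  qed
  show "\<forall>\<^sub>F n in at_top. exp (c*n) * TF c D n \<le> TF c D 0 * exp (2*c) * exp (-c*n)"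
    by (rule eventually_mono[OF eventually_ge_at_top[of 0]]) (rule bnd)
  have "((\<lambda>x. exp (-c*x)) \<longlongrightarrow> 0) at_top" by (rule exp_neg_lim) (use cpos in simp)
  then show "((\<lambda>x. TF c D 0 * exp (2*c) * exp (-c*x)) \<longlongrightarrow> 0) at_top"
    using tendsto_mult_left[of _ 0 at_top "TF c D 0 * exp (2*c)"] by simp
qed simp

lemma hper_eq:
  assumes ceq: "c = lam * T"
  shows "hper lam T D x = exp (2*c*x) * TF c D x"
proof -
  have fi: "((\<lambda>u. exp (-2*c*u) * D u) has_integral (GG c D (x+1) - GG c D x)) {x..x+1}"
  proof (rule fundamental_theorem_of_calculus)
    fix u show "(GG c D has_vector_derivative exp (-2*c*u) * D u) (at u within {x..x+1})"
      unfolding has_real_derivative_iff_has_vector_derivative[symmetric] by (rule has_field_derivative_at_within[OF G_deriv])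
  qed simp
  have e: "(\<lambda>u. exp (- 2 * lam * T * u) * D u) = (\<lambda>u. exp (-2*c*u) * D u)" by (rule ext) (simp add: ceq mult.assoc)
  have "hper lam T D x = exp (2*c*x) / (1 - exp (-2*c)) * (GG c D (x+1) - GG c D x)"
    unfolding hper_def e using integral_unique[OF fi] by (simp add: ceq mult.assoc)
  also have "\<dots> = exp (2*c*x) * TF c D x" unfolding TF_alt by simp
  finally show ?thesis .
qed

end

context setting
begin

lemma Gderiv_ws: "(GG c D has_real_derivative exp (-2*c*x) * D x) (at x within S)"
  using G_deriv has_field_derivative_at_within by blast

lemma minim:
  fixes M \<delta> :: real
  assumes M: "M > 0"
  defines "r \<equiv> \<lambda>u. \<delta> * exp (c*u) * (1 - GG c D u / M)"
  defines "g \<equiv> \<lambda>u. c * r u - \<delta> * exp (c*u) * (exp (-2*c*u) * D u) / M"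
  shows r_deriv: "\<And>u. DERIV r u :> g u"
    and q_eq: "\<And>u. (g u - c * r u)^2 / D u / 2 = \<delta>^2 / (2*M^2) * (exp (-2*c*u) * D u)"
    and H1: "\<And>x. 0 \<le> x \<Longrightarrow> H1_on x r g"
    and H1l: "H1_loc r g"
    and r0: "r 0 = \<delta>"
proof -
  show rd: "DERIV r u :> g u" for u
  proof -
    have d1: "DERIV (\<lambda>u. \<delta> * exp (c*u)) u :> \<delta> * (exp (c*u) * c)"
      by (auto intro!: derivative_eq_intros)
    have d2: "DERIV (\<lambda>u. 1 - GG c D u / M) u :> 0 - exp (-2*c*u) * D u / M"
      by (intro DERIV_diff DERIV_const DERIV_cdivide G_deriv)
    have "DERIV r u :> \<delta> * (exp (c*u) * c) * (1 - GG c D u / M) + (0 - exp (-2*c*u) * D u / M) * (\<delta> * exp (c*u))"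
      unfolding r_def by (rule DERIV_mult[OF d1 d2])
    then show ?thesis by (rule DERIV_cong) (simp add: g_def r_def algebra_simps)
  qed
  show "(g u - c * r u)^2 / D u / 2 = \<delta>^2 / (2*M^2) * (exp (-2*c*u) * D u)" for u
  proof -
    define e where "e = exp (c*u)"
    define w where "w = exp (-2*c*u)"
    have ee: "e * e * w = 1" unfolding e_def w_def
      by (simp add: exp_add[symmetric] algebra_simps)
    have q: "g u - c * r u = - (\<delta> * e * (w * D u) / M)" by (simp add: g_def e_def w_def)
    have "(g u - c * r u)^2 = (\<delta> * e * (w * D u) / M)^2" unfolding q by (rule power2_minus)
    also have "\<dots> = (\<delta> * e * (w * D u))^2 / M^2" by (rule power_divide)
    also have "(\<delta> * e * (w * D u))^2 = \<delta>^2 * (e * e * w) * w * (D u)^2"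
      by (simp only: power2_eq_square mult_ac)
    also have "\<dots> = \<delta>^2 * w * (D u)^2" by (simp add: ee)
    finally have sq: "(g u - c * r u)^2 = \<delta>^2 * w * (D u)^2 / M^2" .
    show ?thesis unfolding sq w_def[symmetric] using Dpos[of u] M by (simp add: power2_eq_square field_simps)
  qed
  have rc: "continuous_on UNIV r"
    unfolding r_def using M by (intro continuous_intros G_cont) auto
  have gc: "continuous_on UNIV g"
    unfolding g_def using M by (intro continuous_intros rc Dc) auto
  have gm: "g \<in> borel_measurable lborel" using borel_measurable_continuous_onI[OF gc] by simp
  have sq: "set_integrable lborel {0..x} (\<lambda>u. (g u)^2)" for x
    by (intro borel_integrable_atLeastAtMost' continuous_intros continuous_on_subset[OF gc]) auto
  have ftc: "r y = r 0 + (LINT u:{0..y}|lborel. g u)" if y: "0 \<le> y" for y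
  proof -
    have "(LBINT u=(0::real)..y. g u) = r y - r 0"
    proof (rule interval_integral_FTC_finite)
      show "continuous_on {min 0 y..max 0 y} g" by (rule continuous_on_subset[OF gc]) auto
      show "(r has_vector_derivative g x) (at x within {min 0 y..max 0 y})" for x
        using rd[of x] by (simp add: has_real_derivative_iff_has_vector_derivative[symmetric] has_field_derivative_at_within)
    qed
    then show ?thesis using y by (simp add: interval_integral_Icc)
  qed
  show "H1_on x r g" if "0 \<le> x" for x
    unfolding H1_on_def
  proof (intro conjI ballI)
    fix y assume "y \<in> {0..x}" then have "0 \<le> y" by simp
    then show "r y = r 0 + (LINT u:{0..y}|lborel. g u)" by (rule ftc)
  qed (rule gm, rule sq)
  show "H1_loc r g"
    unfolding H1_loc_def
  proof (intro conjI allI impI)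
    fix y :: real assume "0 \<le> y"
    then show "r y = r 0 + (LINT u:{0..y}|lborel. g u)" by (rule ftc)
  qed (rule gm, rule sq)
  show "r 0 = \<delta>" by (simp add: r_def G0)
qed

lemma act_fin:
  fixes M \<delta> lam T x :: real
  assumes ceq: "c = lam * T" and M: "M > 0" and x: "0 \<le> x"
  defines "r \<equiv> \<lambda>u. \<delta> * exp (c*u) * (1 - GG c D u / M)"
  defines "g \<equiv> \<lambda>u. c * r u - \<delta> * exp (c*u) * (exp (-2*c*u) * D u) / M"
  shows "action lam T D {0..x} r g = ennreal (\<delta>^2 / (2*M^2) * GG c D x)"
proof -
  have "action lam T D {0..x} r g = (\<integral>\<^sup>+u. ennreal (\<delta>^2 / (2*M^2) * (exp (-2*c*u) * D u)) * indicator {0..x} u \<partial>lborel)"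
    unfolding action_def ceq[symmetric] using q_eq[OF M, of \<delta>] unfolding r_def g_def by simp
  also have "\<dots> = ennreal (\<delta>^2 / (2*M^2) * GG c D x - \<delta>^2 / (2*M^2) * GG c D 0)"
  proof (rule nn_integral_FTC_Icc)
    show "(\<lambda>u. \<delta>^2 / (2*M^2) * (exp (-2*c*u) * D u)) \<in> borel_measurable borel"
      by (intro borel_measurable_continuous_onI continuous_intros Dc)
    show "DERIV (\<lambda>u. \<delta>^2 / (2*M^2) * GG c D u) u :> \<delta>^2 / (2*M^2) * (exp (-2*c*u) * D u)" for u
      by (intro DERIV_cmult G_deriv)
    show "0 \<le> \<delta>^2 / (2*M^2) * (exp (-2*c*u) * D u)" for u
    proof -
      have w: "0 \<le> exp (-2*c*u) * D u" using Wpos[of u] by (rule less_imp_le)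
      show ?thesis by (intro mult_nonneg_nonneg w) simp
    qed
  qed (use x in auto)
  finally show ?thesis by (simp add: G0)
qed

lemma act_inf:
  fixes M \<delta> lam T :: real
  assumes ceq: "c = lam * T" and M: "M > 0"
  defines "r \<equiv> \<lambda>u. \<delta> * exp (c*u) * (1 - GG c D u / M)"
  defines "g \<equiv> \<lambda>u. c * r u - \<delta> * exp (c*u) * (exp (-2*c*u) * D u) / M"
  shows "action lam T D {0..} r g = ennreal (\<delta>^2 / (2*M^2) * TF c D 0)"
proof -
  have "action lam T D {0..} r g = (\<integral>\<^sup>+u. ennreal (\<delta>^2 / (2*M^2) * (exp (-2*c*u) * D u)) * indicator {0..} u \<partial>lborel)"
    unfolding action_def ceq[symmetric] using q_eq[OF M, of \<delta>] unfolding r_def g_def by simp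
  also have "\<dots> = ennreal (0 - (- (\<delta>^2 / (2*M^2)) * TF c D 0))"
  proof (rule nn_integral_FTC_atLeast)
    show "(\<lambda>u. \<delta>^2 / (2*M^2) * (exp (-2*c*u) * D u)) \<in> borel_measurable borel"
      by (intro borel_measurable_continuous_onI continuous_intros Dc)
    show "DERIV (\<lambda>u. - (\<delta>^2 / (2*M^2)) * TF c D u) u :> \<delta>^2 / (2*M^2) * (exp (-2*c*u) * D u)" for u
    proof -
      have "DERIV (\<lambda>u. - (\<delta>^2 / (2*M^2)) * TF c D u) u :> - (\<delta>^2 / (2*M^2)) * (- (exp (-2*c*u) * D u))"
        by (rule DERIV_cmult[OF TF_deriv])
      then show ?thesis by (rule DERIV_cong) simp
    qed
    show "0 \<le> \<delta>^2 / (2*M^2) * (exp (-2*c*u) * D u)" for u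
    proof -
      have w: "0 \<le> exp (-2*c*u) * D u" using Wpos[of u] by (rule less_imp_le)
      show ?thesis by (intro mult_nonneg_nonneg w) simp
    qed
    show "((\<lambda>u. - (\<delta>^2 / (2*M^2)) * TF c D u) \<longlongrightarrow> 0) at_top"
      using tendsto_mult_left[OF TF_lim, of "- (\<delta>^2 / (2*M^2))"] by simp
  qed
  finally show ?thesis by simp
qed

lemma I0fin:
  fixes \<delta> lam T \<phi> :: real
  assumes ceq: "c = lam * T" and phi: "\<phi> > 0"
  shows "I0_fin lam T D \<delta> \<phi> = ennreal (\<delta>^2 / (2 * GG c D \<phi>))"
proof (rule antisym)
  define M where "M = GG c D \<phi>"
  have M: "M > 0" unfolding M_def using G_less[OF phi] G0 by simp
  define r where "r = (\<lambda>u. \<delta> * exp (c*u) * (1 - GG c D u / M))"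
  define g where "g = (\<lambda>u. c * r u - \<delta> * exp (c*u) * (exp (-2*c*u) * D u) / M)"
  have mem: "(r, g) \<in> {(r, g). H1_on \<phi> r g \<and> r 0 = \<delta> \<and> r \<phi> = 0}"
    using H1[OF M, of \<phi> \<delta>] r0[OF M, of \<delta>] phi M unfolding r_def g_def M_def by auto
  have "I0_fin lam T D \<delta> \<phi> \<le> action lam T D {0..\<phi>} r g"
    unfolding I0_fin_def using INF_lower[OF mem, of "\<lambda>rg. action lam T D {0..\<phi>} (fst rg) (snd rg)"] by simp
  also have "\<dots> = ennreal (\<delta>^2 / (2*M^2) * GG c D \<phi>)"
    unfolding r_def g_def by (rule act_fin[OF ceq M]) (use phi in simp)
  also have "\<delta>^2 / (2*M^2) * GG c D \<phi> = \<delta>^2 / (2 * GG c D \<phi>)"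
    using M unfolding M_def by (simp add: power2_eq_square field_simps)
  finally show "I0_fin lam T D \<delta> \<phi> \<le> ennreal (\<delta>^2 / (2 * GG c D \<phi>))" .
  show "ennreal (\<delta>^2 / (2 * GG c D \<phi>)) \<le> I0_fin lam T D \<delta> \<phi>"
    unfolding I0_fin_def
  proof (rule INF_greatest)
    fix rg assume "rg \<in> {(r, g). H1_on \<phi> r g \<and> r 0 = \<delta> \<and> r \<phi> = 0}"
    then obtain r g where rg: "rg = (r, g)" and H: "H1_on \<phi> r g" and r0: "r 0 = \<delta>" and rp: "r \<phi> = 0" by auto
    have "ennreal ((r 0 - exp (-c * \<phi>) * r \<phi>)^2 / (2 * (LINT u:{0..\<phi>}|lborel. exp (-2*c*u) * D u)))
          \<le> action lam T D {0..\<phi>} r g"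
      by (rule LB[OF ceq cpos _ Dc Dpos H]) (use phi in simp)
    then show "ennreal (\<delta>^2 / (2 * GG c D \<phi>)) \<le> action lam T D {0..\<phi>} (fst rg) (snd rg)"
      using r0 rp G_Icc[of \<phi>] phi rg by simp
  qed
qed

lemma I0inf:
  fixes \<delta> lam T :: real
  assumes ceq: "c = lam * T"
  shows "I0_inf lam T D \<delta> = ennreal (\<delta>^2 / (2 * KI c D))"
proof (rule antisym)
  define M where "M = KI c D"
  have M: "M > 0" unfolding M_def using KIpos by simp
  define r where "r = (\<lambda>u. \<delta> * exp (c*u) * (1 - GG c D u / M))"
  define g where "g = (\<lambda>u. c * r u - \<delta> * exp (c*u) * (exp (-2*c*u) * D u) / M)"
  have rlim: "(r \<longlongrightarrow> 0) at_top"
  proof -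
    have "r = (\<lambda>u. \<delta> / M * (exp (c*u) * TF c D u))"
      unfolding r_def TF_def M_def using KIpos by (intro ext) (simp add: field_simps)
    then show ?thesis using tendsto_mult_left[OF TF_lim2, of "\<delta> / M"] by simp
  qed
  have mem: "(r, g) \<in> {(r, g). H1_loc r g \<and> r 0 = \<delta> \<and> (r \<longlongrightarrow> 0) at_top}"
    using H1l[OF M, of \<delta>] r0[OF M, of \<delta>] rlim unfolding r_def g_def by auto
  have "I0_inf lam T D \<delta> \<le> action lam T D {0..} r g"
    unfolding I0_inf_def using INF_lower[OF mem, of "\<lambda>rg. action lam T D {0..} (fst rg) (snd rg)"] by simp
  also have "\<dots> = ennreal (\<delta>^2 / (2*M^2) * TF c D 0)"
    unfolding r_def g_def by (rule act_inf[OF ceq M])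
  also have "\<delta>^2 / (2*M^2) * TF c D 0 = \<delta>^2 / (2 * KI c D)"
    using M unfolding M_def TF0 by (simp add: power2_eq_square field_simps)
  finally show "I0_inf lam T D \<delta> \<le> ennreal (\<delta>^2 / (2 * KI c D))" .
  show "ennreal (\<delta>^2 / (2 * KI c D)) \<le> I0_inf lam T D \<delta>"
    unfolding I0_inf_def
  proof (rule INF_greatest)
    fix rg assume "rg \<in> {(r, g). H1_loc r g \<and> r 0 = \<delta> \<and> (r \<longlongrightarrow> 0) at_top}"
    then obtain r g where rg: "rg = (r, g)" and H: "H1_loc r g" and r0: "r 0 = \<delta>" and rl: "(r \<longlongrightarrow> 0) at_top" by auto
    define f where "f x = (\<delta> - exp (-c * x) * r x)^2 / (2 * (KI c D - TF c D x))" for x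
    have bound: "ennreal (f x) \<le> action lam T D {0..} r g" if x: "0 \<le> x" for x
    proof -
      have Hx: "H1_on x r g" unfolding H1_on_def
      proof (intro conjI ballI)
        show "g \<in> borel_measurable lborel" using H unfolding H1_loc_def by blast
        show "set_integrable lborel {0..x} (\<lambda>u. (g u)^2)" using H x unfolding H1_loc_def by blast
        fix y assume "y \<in> {0..x}" then have "0 \<le> y" by simp
        then show "r y = r 0 + (LINT u:{0..y}|lborel. g u)" using H unfolding H1_loc_def by blast
      qed
      have "ennreal ((r 0 - exp (-c * x) * r x)^2 / (2 * (LINT u:{0..x}|lborel. exp (-2*c*u) * D u)))
          \<le> action lam T D {0..x} r g"
        by (rule LB[OF ceq cpos x Dc Dpos Hx])
      also have "\<dots> \<le> action lam T D {0..} r g"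
        unfolding action_def by (intro nn_integral_mono) (auto split: split_indicator)
      finally show ?thesis using r0 G_Icc[OF x] unfolding f_def TF_def by simp
    qed
    have flim: "(f \<longlongrightarrow> (\<delta> - 0 * 0)^2 / (2 * (KI c D - 0))) at_top"
      unfolding f_def
      by (intro tendsto_intros rl TF_lim exp_neg_lim) (use cpos KIpos in auto)
    have "ennreal (\<delta>^2 / (2 * KI c D)) \<le> action lam T D {0..} r g"
    proof (rule tendsto_le[OF trivial_limit_at_top_linorder tendsto_const])
      show "((\<lambda>x. ennreal (f x)) \<longlongrightarrow> ennreal (\<delta>^2 / (2 * KI c D))) at_top"
        using tendsto_ennrealI[OF flim] by simp
      show "\<forall>\<^sub>F x in at_top. ennreal (f x) \<le> action lam T D {0..} r g"
        by (rule eventually_mono[OF eventually_ge_at_top[of 0]]) (rule bound)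
    qed
    then show "ennreal (\<delta>^2 / (2 * KI c D)) \<le> action lam T D {0..} (fst rg) (snd rg)"
      using rg by simp
  qed
qed

end

lemma alg:
  fixes d K t G1 B E X :: real
  assumes d: "d \<ge> 0" and K: "K > 0" and t: "t > 0" and G: "K - t \<ge> G1" and G1: "G1 > 0"
    and tB: "t \<le> B * E" and E: "E > 0" and EX: "E * X = 1"
  shows "norm (d/(2*(K-t)) - d/(2*K) - 1/2*d*E*(X*t)/K^2) \<le> B/G1 * norm (1/2*d*E*(X*t)/K^2 * E)"
proof -
  have Gp: "K - t > 0" using G G1 by linarith
  have m: "1/2*d*E*(X*t)/K^2 = d*t/(2*K^2)"
  proof -
    have "1/2*d*E*(X*t)/K^2 = 1/2*d*(E*X)*t/K^2" by (simp add: mult_ac)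
    then show ?thesis using EX by simp
  qed
  have lhs: "d/(2*(K-t)) - d/(2*K) - d*t/(2*K^2) = d*t/(2*K^2) * (t/(K-t))"
    using Gp K by (simp add: field_simps power2_eq_square)
  have A: "d*t/(2*K^2) \<ge> 0" using d t K by simp
  have q1: "t/(K-t) \<le> t/G1" using G G1 t by (intro divide_left_mono) auto
  have q2: "t/G1 \<le> B*E/G1" using tB G1 by (intro divide_right_mono) auto
  have "norm (d/(2*(K-t)) - d/(2*K) - 1/2*d*E*(X*t)/K^2) = d*t/(2*K^2) * (t/(K-t))"
  proof -
    have nn: "0 \<le> d*t/(2*K^2) * (t/(K-t))" using t Gp by (intro mult_nonneg_nonneg A divide_nonneg_pos) auto
    show ?thesis unfolding m lhs real_norm_def by (rule abs_of_nonneg[OF nn])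
  qed
  also have "\<dots> \<le> d*t/(2*K^2) * (B*E/G1)" using q1 q2 A by (intro mult_left_mono) auto
  also have "\<dots> = B/G1 * (d*t/(2*K^2) * E)" by (simp add: mult_ac)
  also have "\<dots> = B/G1 * norm (1/2*d*E*(X*t)/K^2 * E)"
  proof -
    have nn2: "0 \<le> d*t/(2*K^2) * E" using E by (intro mult_nonneg_nonneg A) auto
    show ?thesis unfolding m real_norm_def abs_of_nonneg[OF nn2] ..
  qed
  finally show ?thesis .
qed

context setting
begin

lemma final_in:
  fixes lam T \<delta> :: real
  assumes ceq: "c = lam * T" and \<delta>: "\<delta> > 0"
  shows "I0_inf lam T D \<delta> \<noteq> \<infinity>
    \<and> (\<forall>\<^sub>F \<phi> in at_top. I0_fin lam T D \<delta> \<phi> \<noteq> \<infinity>)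
    \<and> (\<lambda>\<phi>. (enn2real (I0_fin lam T D \<delta> \<phi>) - enn2real (I0_inf lam T D \<delta>))
            - 1/2 * \<delta>^2 * exp (- 2 * lam * T * \<phi>) * hper lam T D \<phi> / (hper lam T D 0)^2)
      \<in> O[at_top](\<lambda>\<phi>. (1/2 * \<delta>^2 * exp (- 2 * lam * T * \<phi>) * hper lam T D \<phi> / (hper lam T D 0)^2)
                        * exp (- 2 * lam * T * \<phi>))"
proof -
  have fin: "\<And>\<phi>. \<phi> > 0 \<Longrightarrow> I0_fin lam T D \<delta> \<phi> = ennreal (\<delta>^2 / (2 * GG c D \<phi>))" by (rule I0fin[OF ceq])
  have inf: "I0_inf lam T D \<delta> = ennreal (\<delta>^2 / (2 * KI c D))" by (rule I0inf[OF ceq])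
  have e: "\<And>\<phi>. exp (- 2 * lam * T * \<phi>) = exp (-2*c*\<phi>)" by (simp add: ceq mult.assoc)
  have hp: "\<And>\<phi>. hper lam T D \<phi> = exp (2*c*\<phi>) * TF c D \<phi>" by (rule hper_eq[OF ceq])
  have hp0: "hper lam T D 0 = KI c D" using hp[of 0] TF0 by simp
  show ?thesis
  proof (intro conjI)
    show "I0_inf lam T D \<delta> \<noteq> \<infinity>" unfolding inf by simp
    show "\<forall>\<^sub>F \<phi> in at_top. I0_fin lam T D \<delta> \<phi> \<noteq> \<infinity>"
      by (rule eventually_mono[OF eventually_gt_at_top[of 0]]) (simp add: fin)
    show "(\<lambda>\<phi>. (enn2real (I0_fin lam T D \<delta> \<phi>) - enn2real (I0_inf lam T D \<delta>))
            - 1/2 * \<delta>^2 * exp (- 2 * lam * T * \<phi>) * hper lam T D \<phi> / (hper lam T D 0)^2)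
      \<in> O[at_top](\<lambda>\<phi>. (1/2 * \<delta>^2 * exp (- 2 * lam * T * \<phi>) * hper lam T D \<phi> / (hper lam T D 0)^2)
                        * exp (- 2 * lam * T * \<phi>))"
    proof (rule bigoI[where c = "TF c D 0 * exp (2*c) / GG c D 1"], rule eventually_mono[OF eventually_ge_at_top[of 1]])
      fix \<phi> :: real assume \<phi>: "1 \<le> \<phi>"
      define t where "t = TF c D \<phi>"
      define K where "K = KI c D"
      have Gp: "GG c D \<phi> = K - t" unfolding t_def K_def TF_def by simp
      have K: "K > 0" unfolding K_def by (rule KIpos)
      have t: "t > 0" unfolding t_def by (rule TF_pos)
      have G1: "K - t \<ge> GG c D 1" using G_le[OF \<phi>] Gp by simp
      have tB: "t \<le> TF c D 0 * exp (2*c) * exp (-2*c*\<phi>)" unfolding t_def by (rule TF_bound) (use \<phi> in simp)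
      have EX: "exp (-2*c*\<phi>) * exp (2*c*\<phi>) = 1" by (simp flip: exp_add)
      have r1: "enn2real (I0_fin lam T D \<delta> \<phi>) = \<delta>^2 / (2*(K-t))"
        using fin[of \<phi>] \<phi> Gp G1 G1pos by simp
      have r2: "enn2real (I0_inf lam T D \<delta>) = \<delta>^2 / (2*K)"
        using inf K unfolding K_def by simp
      have "norm (\<delta>^2/(2*(K-t)) - \<delta>^2/(2*K) - 1/2*\<delta>^2*exp (-2*c*\<phi>)*(exp (2*c*\<phi>)*t)/K^2)
            \<le> (TF c D 0 * exp (2*c)) / GG c D 1 * norm (1/2*\<delta>^2*exp (-2*c*\<phi>)*(exp (2*c*\<phi>)*t)/K^2 * exp (-2*c*\<phi>))"
        by (rule alg) (use K t G1 G1pos tB EX in auto)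
      then show "norm ((enn2real (I0_fin lam T D \<delta> \<phi>) - enn2real (I0_inf lam T D \<delta>))
            - 1/2 * \<delta>^2 * exp (- 2 * lam * T * \<phi>) * hper lam T D \<phi> / (hper lam T D 0)^2)
          \<le> TF c D 0 * exp (2*c) / GG c D 1 * norm ((1/2 * \<delta>^2 * exp (- 2 * lam * T * \<phi>) * hper lam T D \<phi> / (hper lam T D 0)^2)
                        * exp (- 2 * lam * T * \<phi>))"
        unfolding r1 r2 e hp[of \<phi>] hp0 K_def[symmetric] t_def[symmetric] .
    qed
  qed
qed

end

theorem proposition4p1:
  fixes lam T \<delta> :: real and D :: "real \<Rightarrow> real"
  assumes "lam > 0" and "T > 0" and "\<delta> > 0"
    and "continuous_on UNIV D"
    and "\<And>x. D (x + 1) = D x"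
    and "\<exists>m>0. \<forall>x. D x \<ge> m"
  shows "I0_inf lam T D \<delta> \<noteq> \<infinity>
    \<and> (\<forall>\<^sub>F \<phi> in at_top. I0_fin lam T D \<delta> \<phi> \<noteq> \<infinity>)
    \<and> (\<lambda>\<phi>. (enn2real (I0_fin lam T D \<delta> \<phi>) - enn2real (I0_inf lam T D \<delta>))
            - 1/2 * \<delta>^2 * exp (- 2 * lam * T * \<phi>) * hper lam T D \<phi> / (hper lam T D 0)^2)
      \<in> O[at_top](\<lambda>\<phi>. (1/2 * \<delta>^2 * exp (- 2 * lam * T * \<phi>) * hper lam T D \<phi> / (hper lam T D 0)^2)
                        * exp (- 2 * lam * T * \<phi>))"
proof -
  obtain m where m: "m > 0" "\<forall>x. D x \<ge> m" using assms(6) by auto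
  have Dpos: "\<And>x. D x > 0" using m by (meson less_le_trans)
  interpret setting "lam * T" D
    by unfold_locales (use assms Dpos in auto)
  show ?thesis by (rule final_in[OF refl assms(3)])
qed

end
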